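(* Consider one iteration of IFCA in the distributed linear regression model described in the context, with current parameter vectors $\theta_1,\ldots,\theta_k$ satisfying $\|\theta_j-\theta_j^*\|\le(\frac12-\alpha)\Delta$ for all $j\in[k]$, where $0<\alpha<\frac12$. Suppose worker machine $i$ belongs to $S_j^*$, and let $\rho=\Delta^2/\sigma^2$. For $j'\in[k]$ let $\mathcal E_i^{j,j'}$ be the event that machine $i$ is assigned to cluster $j'$ in this iteration, and let $\mathcal E_i=\mathcal E_i^{j,j}$. Then there exist universal constants $c_1,c_2>0$ such that for any $j'\neq j$, \[ \mathbb{P}(\mathcal{E}_i^{j,j'}) \le c_1\exp\left(-c_2n'\left(\frac{\alpha \rho}{\rho+1}\right)^2\right), \qquad \mathbb{P}(\overline{\mathcal{E}_i}) \le c_1 k \exp\left(-c_2n'\left(\frac{\alpha \rho}{\rho+1}\right)^2\right). \]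
   Context: Setting: $m$ worker machines partitioned into $k$ unknown disjoint clusters $S_1^*,\ldots,S_k^*$. Every machine in $S_j^*$ holds i.i.d. data points $(x,y)$ with $y=\langle x,\theta_j^*\rangle+\epsilon$, $x\sim\mathcal N(0,I_d)$, $\epsilon\sim\mathcal N(0,\sigma^2)$ independent of $x$. Loss $f(\theta;x,y)=(y-\langle x,\theta\rangle)^2$, and $F_i(\theta;Z)=\frac1{|Z|}\sum_{z\in Z}f(\theta;z)$. $\Delta=\min_{j\neq j'}\|\theta_j^*-\theta_{j'}^*\|$. In the iteration, machine $i$ uses a fresh set $\widehat Z_i$ of $n'$ i.i.d. data points, independent of the current parameters, and is assigned to cluster $\mathrm{argmin}_{j'\in[k]}F_i(\theta_{j'};\widehat Z_i)$; thus $\mathcal E_i^{j,j'}$ is the event that $j'$ is this argmin. $\overline{\mathcal E_i}$ denotes the complement of $\mathcal E_i$. *)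

theory Defs
  imports "HOL-Probability.Probability"
begin

text \<open>Vectors in R^d are represented as functions nat => real, only coordinates l < d matter
  (so that the dimension d can be quantified inside the statement, after the universal constants).\<close>

definition ip :: "nat \<Rightarrow> (nat \<Rightarrow> real) \<Rightarrow> (nat \<Rightarrow> real) \<Rightarrow> real" where
  "ip d u v = (\<Sum>l<d. u l * v l)"

definition vnorm :: "nat \<Rightarrow> (nat \<Rightarrow> real) \<Rightarrow> real" where
  "vnorm d u = sqrt (ip d u u)"

definition Delta :: "nat \<Rightarrow> nat \<Rightarrow> (nat \<Rightarrow> nat \<Rightarrow> real) \<Rightarrow> real" where
  "Delta d k thetas = Min {vnorm d (thetas a - thetas b) | a b. a < k \<and> b < k \<and> a \<noteq> b}"

definition gauss_vec :: "nat \<Rightarrow> (nat \<Rightarrow> real) measure" where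
  "gauss_vec d = PiM {..<d} (\<lambda>_. density lborel std_normal_density)"

definition data_dist :: "nat \<Rightarrow> (nat \<Rightarrow> real) \<Rightarrow> real \<Rightarrow> ((nat \<Rightarrow> real) \<times> real) measure" where
  "data_dist d theta sg =
     distr (gauss_vec d \<Otimes>\<^sub>M density lborel (normal_density 0 sg))
           (PiM {..<d} (\<lambda>_. borel) \<Otimes>\<^sub>M borel)
           (\<lambda>(x, e). (x, ip d x theta + e))"

definition sample_dist :: "nat \<Rightarrow> nat \<Rightarrow> (nat \<Rightarrow> real) \<Rightarrow> real \<Rightarrow> (nat \<Rightarrow> (nat \<Rightarrow> real) \<times> real) measure" where
  "sample_dist n' d theta sg = PiM {..<n'} (\<lambda>_. data_dist d theta sg)"

definition emp_loss :: "nat \<Rightarrow> nat \<Rightarrow> (nat \<Rightarrow> real) \<Rightarrow> (nat \<Rightarrow> (nat \<Rightarrow> real) \<times> real) \<Rightarrow> real" where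
  "emp_loss n' d theta Z = (1 / real n') * (\<Sum>t<n'. (snd (Z t) - ip d (fst (Z t)) theta)\<^sup>2)"

definition assign :: "nat \<Rightarrow> nat \<Rightarrow> nat \<Rightarrow> (nat \<Rightarrow> nat \<Rightarrow> real) \<Rightarrow> (nat \<Rightarrow> (nat \<Rightarrow> real) \<times> real) \<Rightarrow> nat" where
  "assign n' d k theta Z =
     (LEAST l. l < k \<and> (\<forall>l'<k. emp_loss n' d (theta l) Z \<le> emp_loss n' d (theta l') Z))"

end

theory Submission
  imports Defs
begin

lemma normal_mgf_sq:
  fixes s mu c :: real
  assumes s: "0 < s" and mu: "2 * mu * s\<^sup>2 < 1"
  shows "(\<integral>\<^sup>+z. ennreal (normal_density 0 s z) * ennreal (exp (mu * z\<^sup>2 + c)) \<partial>lborel)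
         = ennreal (exp c / sqrt (1 - 2 * mu * s\<^sup>2))"
proof -
  define q where "q = 1 - 2 * mu * s\<^sup>2"
  have q: "0 < q" using mu by (simp add: q_def)
  define s' where "s' = s / sqrt q"
  have s': "0 < s'" using s q by (simp add: s'_def)
  have pt: "normal_density 0 s z * exp (mu * z\<^sup>2 + c) = (exp c / sqrt q) * normal_density 0 s' z" for z
  proof -
    have e: "- z\<^sup>2 / (2 * s\<^sup>2) + (mu * z\<^sup>2 + c) = - z\<^sup>2 / (2 * s'\<^sup>2) + c"
      using s q by (simp add: s'_def q_def field_simps power2_eq_square)
    have r: "sqrt (2 * pi * s'\<^sup>2) = sqrt (2 * pi * s\<^sup>2) / sqrt q"
      using s q by (simp add: s'_def real_sqrt_divide real_sqrt_mult power_divide)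
    have "normal_density 0 s z * exp (mu * z\<^sup>2 + c) = 1 / sqrt (2 * pi * s\<^sup>2) * exp (- z\<^sup>2 / (2 * s\<^sup>2) + (mu * z\<^sup>2 + c))"
      by (simp add: normal_density_def exp_add[symmetric] mult.assoc)
    also have "\<dots> = 1 / sqrt (2 * pi * s\<^sup>2) * exp (- z\<^sup>2 / (2 * s'\<^sup>2)) * exp c"
      by (simp only: e exp_add mult.assoc)
    also have "\<dots> = (exp c / sqrt q) * normal_density 0 s' z"
      unfolding normal_density_def r using q s by (simp add: field_simps)
    finally show ?thesis .
  qed
  have "(\<integral>\<^sup>+z. ennreal (normal_density 0 s z) * ennreal (exp (mu * z\<^sup>2 + c)) \<partial>lborel)
      = (\<integral>\<^sup>+z. ennreal (exp c / sqrt q) * ennreal (normal_density 0 s' z) \<partial>lborel)"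
  proof (intro nn_integral_cong)
    fix z
    have "ennreal (normal_density 0 s z) * ennreal (exp (mu * z\<^sup>2 + c))
       = ennreal (normal_density 0 s z * exp (mu * z\<^sup>2 + c))" by (simp add: ennreal_mult)
    also have "\<dots> = ennreal (exp c / sqrt q * normal_density 0 s' z)" by (simp only: pt)
    also have "\<dots> = ennreal (exp c / sqrt q) * ennreal (normal_density 0 s' z)"
      using q by (intro ennreal_mult) auto
    finally show "ennreal (normal_density 0 s z) * ennreal (exp (mu * z\<^sup>2 + c))
       = ennreal (exp c / sqrt q) * ennreal (normal_density 0 s' z)" .
  qed
  also have "\<dots> = ennreal (exp c / sqrt q) * (\<integral>\<^sup>+z. ennreal (normal_density 0 s' z) \<partial>lborel)"
    by (rule nn_integral_cmult) simp
  also have "(\<integral>\<^sup>+z. ennreal (normal_density 0 s' z) \<partial>lborel) = 1"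
    using s' by (subst nn_integral_eq_integral) auto
  finally show ?thesis by (simp add: q_def)
qed


abbreviation "SN \<equiv> density lborel std_normal_density"

lemma prob_space_SN: "prob_space SN"
  using prob_space_normal_density[of 1 0] by simp

lemma prob_space_gauss_vec: "prob_space (gauss_vec d)"
  unfolding gauss_vec_def by (intro prob_space_PiM prob_space_SN)

lemma sets_gauss_vec: "sets (gauss_vec d) = sets (PiM {..<d} (\<lambda>_. borel))"
  unfolding gauss_vec_def by (intro sets_PiM_cong) auto

lemma gauss_coord_distr:
  assumes "l < d"
  shows "distr (gauss_vec d) lborel (\<lambda>x. x l) = SN"
proof -
  interpret product_prob_space "\<lambda>_::nat. SN" "{..<d}"
    by (intro product_prob_spaceI prob_space_SN)
  have "distr (gauss_vec d) lborel (\<lambda>x. x l) = distr (gauss_vec d) SN (\<lambda>x. x l)"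
    by (intro distr_cong) auto
  also have "\<dots> = SN" unfolding gauss_vec_def using assms by (intro PiM_component) auto
  finally show ?thesis .
qed

lemma gauss_coord_distributed:
  assumes "l < d"
  shows "distributed (gauss_vec d) lborel (\<lambda>x. x l) std_normal_density"
  unfolding distributed_def
proof (intro conjI)
  show "distr (gauss_vec d) lborel (\<lambda>x. x l) = density lborel (\<lambda>x. ennreal (std_normal_density x))"
    using gauss_coord_distr[OF assms] by simp
  show "(\<lambda>x. x l) \<in> measurable (gauss_vec d) lborel"
  proof -
    have "(\<lambda>x. x l) \<in> measurable (gauss_vec d) SN" unfolding gauss_vec_def using assms
      by (intro measurable_component_singleton) auto
    then show ?thesis by (subst measurable_cong_sets[OF refl, of _ SN]) auto
  qed
qed simp

lemma gauss_coord_indep: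
  assumes "0 < d"
  shows "prob_space.indep_vars (gauss_vec d) (\<lambda>_. borel) (\<lambda>l x. x l) {..<d}"
proof -
  interpret prob_space "gauss_vec d" by (rule prob_space_gauss_vec)
  have rv: "random_variable borel (\<lambda>x. x l)" for l :: nat
  proof (cases "l < d")
    case True
    have "(\<lambda>x. x l) \<in> measurable (gauss_vec d) SN" unfolding gauss_vec_def using True
      by (intro measurable_component_singleton) auto
    then show ?thesis using measurable_cong_sets[of "gauss_vec d" "gauss_vec d" SN borel] by simp
  next
    case False
    have "(\<lambda>x. x l) \<in> measurable (gauss_vec d) borel"
    proof (rule measurable_cong[THEN iffD2])
      show "x \<in> space (gauss_vec d) \<Longrightarrow> x l = undefined" for x
        using False unfolding gauss_vec_def by (auto simp: space_PiM PiE_def extensional_def)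
    qed simp
    then show ?thesis .
  qed
  show ?thesis
  proof (subst indep_vars_iff_distr_eq_PiM)
    show "{..<d} \<noteq> {}" using assms by auto
    show "random_variable borel (\<lambda>x. x l)" for l by (rule rv)
    have "distr (gauss_vec d) (Pi\<^sub>M {..<d} (\<lambda>_. borel)) (\<lambda>x. \<lambda>i\<in>{..<d}. x i)
       = distr (gauss_vec d) (gauss_vec d) (\<lambda>x. x)"
    proof (rule distr_cong)
      show "sets (Pi\<^sub>M {..<d} (\<lambda>_. borel)) = sets (gauss_vec d)" by (simp add: sets_gauss_vec)
      show "x \<in> space (gauss_vec d) \<Longrightarrow> (\<lambda>i\<in>{..<d}. x i) = x" for x
        unfolding gauss_vec_def by (auto simp: space_PiM PiE_def extensional_def restrict_def)
    qed simp
    also have "\<dots> = gauss_vec d" by (rule distr_id2) simp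
    also have "\<dots> = (Pi\<^sub>M {..<d} (\<lambda>i. distr (gauss_vec d) borel (\<lambda>x. x i)))"
      unfolding gauss_vec_def
    proof (intro PiM_cong refl)
      fix i assume "i \<in> {..<d}"
      then have "distr (gauss_vec d) borel (\<lambda>x. x i) = distr (gauss_vec d) lborel (\<lambda>x. x i)"
        by (intro distr_cong) auto
      then show "SN = distr (PiM {..<d} (\<lambda>_. SN)) borel (\<lambda>x. x i)"
        using gauss_coord_distr[of i d] \<open>i \<in> {..<d}\<close> unfolding gauss_vec_def by simp
    qed
    finally show "distr (gauss_vec d) (Pi\<^sub>M {..<d} (\<lambda>_. borel)) (\<lambda>x. \<lambda>i\<in>{..<d}. x i)
       = (Pi\<^sub>M {..<d} (\<lambda>i. distr (gauss_vec d) borel (\<lambda>x. x i)))" .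
  qed
qed


lemma ip_nonneg: "0 \<le> ip d w w"
  unfolding ip_def by (auto intro: sum_nonneg)

lemma vnorm_sq: "(vnorm d w)\<^sup>2 = ip d w w"
  unfolding vnorm_def using ip_nonneg by simp

lemma gauss_ip_distributed:
  assumes pos: "0 < vnorm d w"
  shows "distributed (gauss_vec d) lborel (\<lambda>x. ip d x w) (normal_density 0 (vnorm d w))"
proof -
  interpret prob_space "gauss_vec d" by (rule prob_space_gauss_vec)
  define I where "I = {l\<in>{..<d}. w l \<noteq> 0}"
  have fin: "finite I" unfolding I_def by auto
  have ne: "I \<noteq> {}"
  proof
    assume "I = {}"
    then have "ip d w w = 0" unfolding ip_def I_def by (auto intro!: sum.neutral)
    then show False using pos unfolding vnorm_def by simp
  qed
  then have d: "0 < d" unfolding I_def by auto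
  have ind: "indep_vars (\<lambda>_. borel) (\<lambda>l x. w l * x l) I"
  proof (rule indep_vars_subset)
    show "indep_vars (\<lambda>_. borel) (\<lambda>l x. w l * x l) {..<d}"
      using indep_vars_compose2[OF gauss_coord_indep[OF d], of "\<lambda>l z. w l * z" "\<lambda>_. borel"] by simp
    show "I \<subseteq> {..<d}" unfolding I_def by auto
  qed
  have dist: "distributed (gauss_vec d) lborel (\<lambda>x. w l * x l) (normal_density 0 \<bar>w l\<bar>)" if "l \<in> I" for l
  proof -
    have "distributed (gauss_vec d) lborel (\<lambda>x. 0 + w l * x l) (normal_density (0 + w l * 0) (\<bar>w l\<bar> * 1))"
      by (rule normal_density_affine) (use that gauss_coord_distributed in \<open>auto simp: I_def\<close>)
    then show ?thesis by simp
  qed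
  have "distributed (gauss_vec d) lborel (\<lambda>x. \<Sum>l\<in>I. w l * x l) (normal_density (\<Sum>l\<in>I. 0) (sqrt (\<Sum>l\<in>I. \<bar>w l\<bar>\<^sup>2)))"
    by (rule sum_indep_normal[OF fin ne ind]) (use dist in \<open>auto simp: I_def\<close>)
  moreover have "(\<lambda>x. \<Sum>l\<in>I. w l * x l) = (\<lambda>x. ip d x w)"
    unfolding ip_def I_def by (intro ext sum.mono_neutral_cong_left) auto
  moreover have "sqrt (\<Sum>l\<in>I. \<bar>w l\<bar>\<^sup>2) = vnorm d w"
    unfolding vnorm_def ip_def I_def by (intro arg_cong[where f=sqrt] sum.mono_neutral_cong_left) (auto simp: power2_eq_square)
  ultimately show ?thesis by simp
qed


abbreviation "ND sg \<equiv> density lborel (normal_density 0 sg)"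

lemma distr_pair_snd':
  assumes "prob_space N" "prob_space M"
  shows "distr (N \<Otimes>\<^sub>M M) M snd = M"
proof (intro measure_eqI)
  interpret N: prob_space N by fact
  interpret M: prob_space M by fact
  fix A assume A: "A \<in> sets (distr (N \<Otimes>\<^sub>M M) M snd)"
  from A have "emeasure (distr (N \<Otimes>\<^sub>M M) M snd) A = emeasure (N \<Otimes>\<^sub>M M) (space N \<times> A)"
    by (auto simp add: emeasure_distr space_pair_measure dest: sets.sets_into_space intro!: arg_cong2[where f=emeasure])
  with A show "emeasure (distr (N \<Otimes>\<^sub>M M) M snd) A = emeasure M A"
    by (simp add: M.emeasure_pair_measure_Times N.emeasure_space_1)
qed simp

lemma pair_distributed:
  assumes sg: "0 < sg"
  shows "distributed (gauss_vec d \<Otimes>\<^sub>M ND sg) lborel (\<lambda>(x, e). ip d x w + e)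
           (normal_density 0 (sqrt ((vnorm d w)\<^sup>2 + sg\<^sup>2)))"
proof -
  let ?G = "gauss_vec d" and ?N = "ND sg"
  interpret G: prob_space ?G by (rule prob_space_gauss_vec)
  interpret N: prob_space ?N using prob_space_normal_density[OF sg] .
  interpret GN: pair_prob_space ?G ?N ..
  have Pps: "prob_space (?G \<Otimes>\<^sub>M ?N)" by (rule GN.prob_space_axioms)
  have sndd: "distr (?G \<Otimes>\<^sub>M ?N) ?N snd = ?N"
    by (rule distr_pair_snd') (unfold_locales)
  have fstd: "distr (?G \<Otimes>\<^sub>M ?N) ?G fst = ?G"
    by (rule N.distr_pair_fst)
  have snd_dist: "distributed (?G \<Otimes>\<^sub>M ?N) lborel snd (normal_density 0 sg)"
    unfolding distributed_def
  proof (intro conjI)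
    have "distr (?G \<Otimes>\<^sub>M ?N) lborel snd = distr (?G \<Otimes>\<^sub>M ?N) ?N snd"
      by (intro distr_cong) auto
    then show "distr (?G \<Otimes>\<^sub>M ?N) lborel snd = density lborel (\<lambda>x. ennreal (normal_density 0 sg x))"
      using sndd by simp
    have "snd \<in> measurable (?G \<Otimes>\<^sub>M ?N) ?N" by simp
    then show "snd \<in> measurable (?G \<Otimes>\<^sub>M ?N) lborel"
      using measurable_cong_sets[of "?G \<Otimes>\<^sub>M ?N" "?G \<Otimes>\<^sub>M ?N" ?N lborel] by simp
  qed simp
  show ?thesis
  proof (cases "vnorm d w = 0")
    case True
    then have "ip d w w = 0" unfolding vnorm_def by simp
    then have "\<forall>l\<in>{..<d}. w l * w l = 0" unfolding ip_def
      by (subst sum_nonneg_eq_0_iff[symmetric]) auto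
    then have "ip d x w = 0" for x unfolding ip_def by (auto intro!: sum.neutral)
    then have "(\<lambda>(x, e). ip d x w + e) = snd" by auto
    then show ?thesis using snd_dist sg True by simp
  next
    case False
    then have pos: "0 < vnorm d w" unfolding vnorm_def using ip_nonneg[of d w] by simp
    note gd = gauss_ip_distributed[OF pos]
    have ipm: "(\<lambda>x. ip d x w) \<in> measurable ?G lborel" using gd by (rule distributed_measurable)
    have fstm: "fst \<in> measurable (?G \<Otimes>\<^sub>M ?N) ?G" by simp
    have sndm: "snd \<in> measurable (?G \<Otimes>\<^sub>M ?N) ?N" by simp
    have ind: "prob_space.indep_var (?G \<Otimes>\<^sub>M ?N) borel (\<lambda>p. ip d (fst p) w) borel snd"
      unfolding prob_space.indep_var_distribution_eq[OF Pps]
    proof (intro conjI)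
      have ipb: "(\<lambda>x. ip d x w) \<in> borel_measurable ?G" using ipm by simp
      have idb: "(\<lambda>z::real. z) \<in> borel_measurable ?N" by simp
      have e1: "distr (?G \<Otimes>\<^sub>M ?N) borel (\<lambda>p. ip d (fst p) w) = distr ?G borel (\<lambda>x. ip d x w)"
        using distr_distr[OF ipb fstm] fstd by (simp add: comp_def)
      have e2: "distr (?G \<Otimes>\<^sub>M ?N) borel snd = distr ?N borel (\<lambda>z. z)"
        using distr_distr[OF idb sndm] sndd by (simp add: comp_def)
      have sf: "sigma_finite_measure (distr ?N borel (\<lambda>z::real. z))"
        using prob_space_imp_sigma_finite[OF N.prob_space_distr[OF idb]] .
      show "distr (?G \<Otimes>\<^sub>M ?N) borel (\<lambda>p. ip d (fst p) w) \<Otimes>\<^sub>M distr (?G \<Otimes>\<^sub>M ?N) borel snd =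
            distr (?G \<Otimes>\<^sub>M ?N) (borel \<Otimes>\<^sub>M borel) (\<lambda>x. (ip d (fst x) w, snd x))"
        unfolding e1 e2 pair_measure_distr[OF ipb idb sf]
        by (intro distr_cong) auto
      show "(\<lambda>p. ip d (fst p) w) \<in> borel_measurable (?G \<Otimes>\<^sub>M ?N)"
        using measurable_comp[OF fstm ipb] by (simp add: comp_def)
    qed simp
    have Xd: "distributed (?G \<Otimes>\<^sub>M ?N) lborel ((\<lambda>x. ip d x w) \<circ> fst) (normal_density 0 (vnorm d w))"
      unfolding distributed_def
    proof (intro conjI)
      have "distr (?G \<Otimes>\<^sub>M ?N) lborel ((\<lambda>x. ip d x w) \<circ> fst) = distr (distr (?G \<Otimes>\<^sub>M ?N) ?G fst) lborel (\<lambda>x. ip d x w)"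
        by (rule distr_distr[symmetric, OF ipm fstm])
      also have "\<dots> = density lborel (normal_density 0 (vnorm d w))"
        using fstd distributed_distr_eq_density[OF gd] by simp
      finally show "distr (?G \<Otimes>\<^sub>M ?N) lborel ((\<lambda>x. ip d x w) \<circ> fst) = density lborel (\<lambda>x. ennreal (normal_density 0 (vnorm d w) x))" .
      show "(\<lambda>x. ip d x w) \<circ> fst \<in> measurable (?G \<Otimes>\<^sub>M ?N) lborel"
        using ipm fstm by (rule measurable_comp[rotated])
    qed simp
    have "distributed (?G \<Otimes>\<^sub>M ?N) lborel (\<lambda>x. ((\<lambda>x. ip d x w) \<circ> fst) x + snd x)
       (normal_density (0 + 0) (sqrt ((vnorm d w)\<^sup>2 + sg\<^sup>2)))"
      by (rule prob_space.add_indep_normal[OF Pps _ pos sg Xd]) (use ind snd_dist in \<open>simp_all add: comp_def\<close>)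
    moreover have "(\<lambda>x. ((\<lambda>x. ip d x w) \<circ> fst) x + snd x) = (\<lambda>(x, e). ip d x w + e)"
      by auto
    ultimately show ?thesis by simp
  qed
qed


lemma ip_meas[measurable]: "(\<lambda>x. ip d x w) \<in> borel_measurable (PiM {..<d} (\<lambda>_. borel))"
  unfolding ip_def by measurable

lemma ip_diff: "ip d x a - ip d x b = ip d x (a - b)"
  unfolding ip_def by (simp add: sum_subtractf right_diff_distrib)

lemma data_map_meas:
  "(\<lambda>(x, e). (x, ip d x th + e)) \<in> measurable (gauss_vec d \<Otimes>\<^sub>M ND sg) (PiM {..<d} (\<lambda>_. borel) \<Otimes>\<^sub>M borel)"
proof -
  have "sets (gauss_vec d \<Otimes>\<^sub>M ND sg) = sets (PiM {..<d} (\<lambda>_. borel) \<Otimes>\<^sub>M borel)"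
    by (intro sets_pair_measure_cong sets_gauss_vec) simp
  then have e: "measurable (gauss_vec d \<Otimes>\<^sub>M ND sg) (PiM {..<d} (\<lambda>_. borel) \<Otimes>\<^sub>M borel)
     = measurable (PiM {..<d} (\<lambda>_. borel) \<Otimes>\<^sub>M borel) (PiM {..<d} (\<lambda>_. borel) \<Otimes>\<^sub>M borel)"
    by (rule measurable_cong_sets) simp
  show ?thesis unfolding e by measurable
qed

lemma data_mgf:
  assumes sg: "0 < sg" and mu: "2 * mu * ((vnorm d (ths - th))\<^sup>2 + sg\<^sup>2) < 1"
  shows "(\<integral>\<^sup>+p. ennreal (exp (mu * (snd p - ip d (fst p) th)\<^sup>2 + c)) \<partial>data_dist d ths sg)
        = ennreal (exp c / sqrt (1 - 2 * mu * ((vnorm d (ths - th))\<^sup>2 + sg\<^sup>2)))"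
proof -
  define s where "s = sqrt ((vnorm d (ths - th))\<^sup>2 + sg\<^sup>2)"
  have s: "0 < s" using sg by (simp add: s_def add_nonneg_pos)
  have s2: "s\<^sup>2 = (vnorm d (ths - th))\<^sup>2 + sg\<^sup>2" unfolding s_def by (simp add: add_nonneg_nonneg)
  have g: "(\<lambda>p. ennreal (exp (mu * (snd p - ip d (fst p) th)\<^sup>2 + c))) \<in> borel_measurable (PiM {..<d} (\<lambda>_. borel) \<Otimes>\<^sub>M borel)"
    by measurable
  have "(\<integral>\<^sup>+p. ennreal (exp (mu * (snd p - ip d (fst p) th)\<^sup>2 + c)) \<partial>data_dist d ths sg)
     = (\<integral>\<^sup>+p. ennreal (exp (mu * (snd ((\<lambda>(x, e). (x, ip d x ths + e)) p) - ip d (fst ((\<lambda>(x, e). (x, ip d x ths + e)) p)) th)\<^sup>2 + c)) \<partial>(gauss_vec d \<Otimes>\<^sub>M ND sg))"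
    unfolding data_dist_def by (rule nn_integral_distr[OF data_map_meas]) (use g in simp)
  also have "\<dots> = (\<integral>\<^sup>+p. ennreal (exp (mu * ((\<lambda>(x, e). ip d x (ths - th) + e) p)\<^sup>2 + c)) \<partial>(gauss_vec d \<Otimes>\<^sub>M ND sg))"
  proof (intro nn_integral_cong)
    fix p :: "(nat \<Rightarrow> real) \<times> real"
    obtain x e where p: "p = (x, e)" by (cases p)
    have eq: "ip d x ths + e - ip d x th = ip d x (ths - th) + e" using ip_diff[of d x ths th] by linarith
    then show "ennreal (exp (mu * (snd ((\<lambda>(x, e). (x, ip d x ths + e)) p) - ip d (fst ((\<lambda>(x, e). (x, ip d x ths + e)) p)) th)\<^sup>2 + c))
      = ennreal (exp (mu * ((\<lambda>(x, e). ip d x (ths - th) + e) p)\<^sup>2 + c))"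
      unfolding p by (simp only: prod.case fst_conv snd_conv eq)
  qed
  also have "\<dots> = (\<integral>\<^sup>+z. ennreal (normal_density 0 s z) * ennreal (exp (mu * z\<^sup>2 + c)) \<partial>lborel)"
    by (rule distributed_nn_integral[symmetric, OF pair_distributed[OF sg, of d "ths - th", folded s_def]]) simp
  also have "\<dots> = ennreal (exp c / sqrt (1 - 2 * mu * s\<^sup>2))"
    by (rule normal_mgf_sq[OF s]) (use mu s2 in simp)
  finally show ?thesis by (simp add: s2)
qed


abbreviation "DS d \<equiv> PiM {..<d} (\<lambda>_. borel) \<Otimes>\<^sub>M (borel :: real measure)"

lemma prob_space_data: "0 < sg \<Longrightarrow> prob_space (data_dist d ths sg)"
proof -
  assume sg: "0 < sg"
  interpret G: prob_space "gauss_vec d" by (rule prob_space_gauss_vec)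
  interpret N: prob_space "ND sg" using prob_space_normal_density[OF sg] .
  interpret GN: pair_prob_space "gauss_vec d" "ND sg" ..
  show ?thesis unfolding data_dist_def by (rule GN.prob_space_distr[OF data_map_meas])
qed

lemma sets_sample: "sets (sample_dist n' d ths sg) = sets (PiM {..<n'} (\<lambda>_. DS d))"
  unfolding sample_dist_def data_dist_def by (intro sets_PiM_cong) auto

lemma sample_fun_meas:
  assumes "\<And>t. t < n' \<Longrightarrow> (\<lambda>p. f t p) \<in> borel_measurable (DS d)"
  shows "(\<lambda>Z. \<Sum>t<n'. f t (Z t) :: real) \<in> borel_measurable (sample_dist n' d ths sg)"
proof -
  have e: "borel_measurable (sample_dist n' d ths sg) = borel_measurable (PiM {..<n'} (\<lambda>_. DS d))"
    by (rule measurable_cong_sets[OF sets_sample refl])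
  show ?thesis unfolding e using assms
    by (intro borel_measurable_sum) (auto intro: measurable_compose[OF measurable_component_singleton])
qed

lemma tail_bound:
  fixes n' d :: nat and ths th :: "nat \<Rightarrow> real" and sg mu c :: real
  assumes sg: "0 < sg" and mu: "2 * mu * ((vnorm d (ths - th))\<^sup>2 + sg\<^sup>2) < 1"
  defines "M \<equiv> sample_dist n' d ths sg"
  shows "measure M {Z \<in> space M. 0 \<le> (\<Sum>t<n'. mu * (snd (Z t) - ip d (fst (Z t)) th)\<^sup>2 + c)}
        \<le> (exp c / sqrt (1 - 2 * mu * ((vnorm d (ths - th))\<^sup>2 + sg\<^sup>2))) ^ n'"
proof -
  let ?D = "data_dist d ths sg"
  let ?h = "\<lambda>p. mu * (snd p - ip d (fst p) th)\<^sup>2 + c"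
  let ?b = "exp c / sqrt (1 - 2 * mu * ((vnorm d (ths - th))\<^sup>2 + sg\<^sup>2))"
  have b0: "0 \<le> ?b" using mu by (intro divide_nonneg_nonneg) auto
  interpret D: prob_space ?D by (rule prob_space_data[OF sg])
  interpret PP: product_prob_space "\<lambda>_::nat. ?D" "{..<n'}" ..
  interpret MP: prob_space M unfolding M_def sample_dist_def by (rule prob_space_PiM) (rule D.prob_space_axioms)
  have hm: "?h \<in> borel_measurable (DS d)" by measurable
  have hmD: "?h \<in> borel_measurable ?D" using hm unfolding data_dist_def by simp
  have Sm: "(\<lambda>Z. \<Sum>t<n'. ?h (Z t)) \<in> borel_measurable M"
    unfolding M_def by (rule sample_fun_meas) (use hm in simp)
  define E where "E = {Z \<in> space M. 0 \<le> (\<Sum>t<n'. ?h (Z t))}"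
  have Es: "E \<in> sets M" unfolding E_def using Sm by measurable
  have "emeasure M E = (\<integral>\<^sup>+Z. indicator E Z \<partial>M)" using Es by simp
  also have "\<dots> \<le> (\<integral>\<^sup>+Z. ennreal (exp (\<Sum>t<n'. ?h (Z t))) \<partial>M)"
  proof (intro nn_integral_mono)
    fix Z show "indicator E Z \<le> ennreal (exp (\<Sum>t<n'. ?h (Z t)))"
      by (cases "Z \<in> E") (auto simp: E_def)
  qed
  also have "\<dots> = (\<integral>\<^sup>+Z. (\<Prod>t\<in>{..<n'}. ennreal (exp (?h (Z t)))) \<partial>M)"
    by (intro nn_integral_cong) (simp add: exp_sum prod_ennreal)
  also have "\<dots> = (\<Prod>t\<in>{..<n'}. \<integral>\<^sup>+p. ennreal (exp (?h p)) \<partial>?D)"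
    unfolding M_def sample_dist_def
    by (rule PP.product_nn_integral_prod) (use hmD in auto)
  also have "\<dots> = (\<Prod>t\<in>{..<n'}. ennreal ?b)"
    using data_mgf[OF sg mu, of c] by simp
  also have "\<dots> = ennreal (?b ^ n')" by (simp add: ennreal_power[OF b0])
  finally have "emeasure M E \<le> ennreal (?b ^ n')" .
  then have "measure M E \<le> ?b ^ n'"
    using b0 by (simp add: MP.emeasure_eq_measure ennreal_le_iff)
  then show ?thesis unfolding E_def .
qed


lemma factor_bound:
  fixes z c K :: real
  assumes z: "0 < z" and h: "c - ln z / 2 \<le> K"
  shows "exp c / sqrt z \<le> exp K"
proof -
  have "sqrt z = exp (ln z / 2)" using z by (simp add: ln_sqrt[symmetric])
  then have "exp c / sqrt z = exp (c - ln z / 2)" by (simp add: exp_diff)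
  also have "\<dots> \<le> exp K" using h by simp
  finally show ?thesis .
qed

lemma arith_upper:
  fixes q S Bv T lam :: real
  assumes q0: "0 \<le> q" and q1: "q \<le> 1/2" and S: "0 < S" and Bv0: "0 < Bv" and BvS: "Bv \<le> S"
    and T: "T = Bv + q * S" and lam: "lam = q / (8 * S)"
  shows "2 * lam * Bv < 1" and "exp (- lam * T) / sqrt (1 - 2 * lam * Bv) \<le> exp (- (q\<^sup>2 / 32))"
proof -
  define x where "x = 2 * lam * Bv"
  have x0: "0 \<le> x" using q0 S Bv0 by (simp add: x_def lam)
  have xq: "x \<le> q / 4"
  proof -
    have "x = q * Bv / (4 * S)" by (simp add: x_def lam)
    also have "\<dots> \<le> q * S / (4 * S)" using q0 BvS S by (intro divide_right_mono mult_left_mono) auto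
    also have "\<dots> = q / 4" using S by simp
    finally show ?thesis .
  qed
  then have x1: "x \<le> 1/8" using q1 by simp
  then show "2 * lam * Bv < 1" by (simp add: x_def)
  have ln: "- x - 2 * x\<^sup>2 \<le> ln (1 - x)"
    using ln_one_minus_pos_lower_bound[of x] x0 x1 by simp
  have "- lam * T - ln (1 - x) / 2 \<le> - lam * T + (x + 2 * x\<^sup>2) / 2" using ln by simp
  also have "\<dots> = - lam * q * S + 2 * lam\<^sup>2 * Bv\<^sup>2 * 2"
    by (simp add: T x_def power2_eq_square algebra_simps)
  also have "\<dots> \<le> - lam * q * S + 2 * lam\<^sup>2 * S\<^sup>2 * 2"
    using BvS Bv0 by (intro add_left_mono mult_right_mono mult_left_mono power_mono) auto
  also have "\<dots> = - (q\<^sup>2 / 16)" using S by (simp add: lam power2_eq_square field_simps)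
  also have "\<dots> \<le> - (q\<^sup>2 / 32)" by simp
  finally show "exp (- lam * T) / sqrt (1 - 2 * lam * Bv) \<le> exp (- (q\<^sup>2 / 32))"
    using x1 by (intro factor_bound) (auto simp: x_def)
qed

lemma arith_lower:
  fixes q S A Bv T lam :: real
  assumes q0: "0 \<le> q" and q1: "q \<le> 1/2" and S: "0 < S" and Bv0: "0 < Bv" and BvS: "Bv \<le> S"
    and AB: "Bv + 2 * q * S \<le> A"
    and T: "T = Bv + q * S" and lam: "lam = q / (8 * A)"
  shows "2 * (- lam) * A < 1" and "exp (lam * T) / sqrt (1 - 2 * (- lam) * A) \<le> exp (- (q\<^sup>2 / 32))"
proof -
  have A: "0 < A" using AB Bv0 q0 S by (smt (verit) mult_nonneg_nonneg)
  have l0: "0 \<le> lam" using q0 A by (simp add: lam)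
  have "0 \<le> lam * A" using l0 A by simp
  then show "2 * (- lam) * A < 1" by simp
  have y: "2 * lam * A = q / 4" using A by (simp add: lam)
  have ln: "q / 4 - (q / 4)\<^sup>2 \<le> ln (1 + q / 4)"
    using ln_one_plus_pos_lower_bound[of "q/4"] q0 q1 by simp
  have key: "A * (1 - q / 2) \<ge> T"
  proof -
    have h1: "A * (1 - q / 2) \<ge> (Bv + 2 * q * S) * (1 - q / 2)" using AB q1 by (intro mult_right_mono) auto
    have h2: "q * Bv \<le> q * S" using q0 BvS by (simp add: mult_left_mono)
    have "q * q \<le> q * (1/2)" using mult_left_mono[OF q1 q0] .
    then have h3: "q * q * S \<le> q * (1/2) * S" using S by (intro mult_right_mono) auto
    have h4: "(Bv + 2 * q * S) * (1 - q / 2) = Bv + 2 * q * S - q * Bv / 2 - q * q * S"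
      by (simp add: algebra_simps)
    show ?thesis using h1 h2 h3 h4 unfolding T by linarith
  qed
  have "lam * T - ln (1 + q / 4) / 2 \<le> lam * T - (q / 4 - (q / 4)\<^sup>2) / 2" using ln by simp
  also have "\<dots> \<le> lam * (A * (1 - q / 2)) - (q / 4 - (q / 4)\<^sup>2) / 2"
    using key l0 by (simp add: mult_left_mono)
  also have "\<dots> = - (q\<^sup>2 / 32)" using A by (simp add: lam power2_eq_square field_simps)
  finally have h: "lam * T - ln (1 + q / 4) / 2 \<le> - (q\<^sup>2 / 32)" .
  have e: "1 - 2 * (- lam) * A = 1 + q / 4" using y by simp
  show "exp (lam * T) / sqrt (1 - 2 * (- lam) * A) \<le> exp (- (q\<^sup>2 / 32))"
    unfolding e using q0 h by (intro factor_bound) auto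
qed


lemma assign_prop:
  assumes "0 < k"
  shows "assign n' d k theta Z < k \<and>
    (\<forall>l'<k. emp_loss n' d (theta (assign n' d k theta Z)) Z \<le> emp_loss n' d (theta l') Z)"
proof -
  let ?L = "\<lambda>l. emp_loss n' d (theta l) Z"
  have fin: "finite (?L ` {..<k})" and ne: "?L ` {..<k} \<noteq> {}" using assms by auto
  obtain l where l: "l < k" "?L l = Min (?L ` {..<k})" using Min_in[OF fin ne] by auto
  have "\<forall>l'<k. ?L l \<le> ?L l'" using l(2) Min_le[OF fin] by auto
  then have ex: "\<exists>l. l < k \<and> (\<forall>l'<k. ?L l \<le> ?L l')" using l(1) by blast
  show ?thesis unfolding assign_def by (rule LeastI_ex[OF ex])
qed

lemma vnorm_L2: "vnorm d u = L2_set u {..<d}"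
  unfolding vnorm_def ip_def L2_set_def by (simp add: power2_eq_square)

lemma vnorm_nonneg: "0 \<le> vnorm d u"
  unfolding vnorm_def using ip_nonneg by simp

lemma vnorm_tri: "vnorm d (a - c) \<le> vnorm d (a - b) + vnorm d (b - c)"
proof -
  have "vnorm d (a - c) = L2_set (\<lambda>l. (a - b) l + (b - c) l) {..<d}"
    unfolding vnorm_L2 by (simp add: fun_diff_def)
  also have "\<dots> \<le> vnorm d (a - b) + vnorm d (b - c)"
    unfolding vnorm_L2 by (rule L2_set_triangle_ineq)
  finally show ?thesis .
qed

lemma vnorm_comm: "vnorm d (a - b) = vnorm d (b - a)"
  unfolding vnorm_def ip_def by (simp add: algebra_simps)

lemma Delta_facts:
  assumes "2 \<le> k"
  shows "0 \<le> Delta d k th" and "\<And>a b. a < k \<Longrightarrow> b < k \<Longrightarrow> a \<noteq> b \<Longrightarrow> Delta d k th \<le> vnorm d (th a - th b)"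
proof -
  let ?X = "{vnorm d (th a - th b) | a b. a < k \<and> b < k \<and> a \<noteq> b}"
  have "?X \<subseteq> (\<lambda>(a, b). vnorm d (th a - th b)) ` ({..<k} \<times> {..<k})" by auto
  then have fin: "finite ?X" by (rule finite_subset) auto
  have ne: "?X \<noteq> {}" proof -
    have "vnorm d (th 0 - th 1) \<in> ?X" using assms by force
    then show ?thesis by blast
  qed
  have "Min ?X \<in> ?X" by (rule Min_in[OF fin ne])
  then show "0 \<le> Delta d k th" unfolding Delta_def using vnorm_nonneg by auto
  show "Delta d k th \<le> vnorm d (th a - th b)" if "a < k" "b < k" "a \<noteq> b" for a b
    unfolding Delta_def using that by (intro Min_le[OF fin]) auto
qed


lemma pair_bound:
  fixes d k n' :: nat and thetas theta :: "nat \<Rightarrow> nat \<Rightarrow> real" and sg alpha :: real and j j' :: nat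
  assumes k: "2 \<le> k" and n: "0 < n'" and sg: "0 < sg" and a0: "0 < alpha" and a1: "alpha < 1/2"
    and j: "j < k" and j': "j' < k" and jj: "j' \<noteq> j"
    and close: "\<forall>l<k. vnorm d (theta l - thetas l) \<le> (1/2 - alpha) * Delta d k thetas"
  defines "M \<equiv> sample_dist n' d (thetas j) sg"
  defines "rho \<equiv> (Delta d k thetas)\<^sup>2 / sg\<^sup>2"
  shows "\<exists>U. U \<in> sets M \<and> {Z \<in> space M. assign n' d k theta Z = j'} \<subseteq> U \<and>
      measure M U \<le> 2 * exp (- (1/32) * real n' * (alpha * rho / (rho + 1))\<^sup>2)"
proof -
  define D where "D = Delta d k thetas"
  have D0: "0 \<le> D" unfolding D_def using Delta_facts(1)[OF k] .
  define S where "S = D\<^sup>2 + sg\<^sup>2"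
  have S: "0 < S" unfolding S_def using sg by (simp add: add_nonneg_pos)
  define q where "q = alpha * D\<^sup>2 / S"
  have qrho: "q = alpha * rho / (rho + 1)"
    unfolding q_def rho_def D_def[symmetric] S_def using sg by (simp add: field_simps)
  have q0: "0 \<le> q" unfolding q_def using a0 S by simp
  have q1: "q \<le> 1/2"
  proof -
    have "D\<^sup>2 / S \<le> 1" using S by (simp add: S_def)
    then have "alpha * (D\<^sup>2 / S) \<le> alpha * 1" using a0 by (intro mult_left_mono) auto
    then have "q \<le> alpha" unfolding q_def by simp
    then show ?thesis using a1 by linarith
  qed
  have qS: "q * S = alpha * D\<^sup>2" unfolding q_def using S by simp
  define u where "u = thetas j - theta j"
  define v where "v = thetas j - theta j'"
  have nu: "vnorm d u \<le> (1/2 - alpha) * D"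
    using close j unfolding u_def D_def by (subst vnorm_comm) auto
  have nv: "(1/2 + alpha) * D \<le> vnorm d v"
  proof -
    have "D \<le> vnorm d (thetas j - thetas j')" unfolding D_def using Delta_facts(2)[OF k j j'] jj by simp
    also have "\<dots> \<le> vnorm d (thetas j - theta j') + vnorm d (theta j' - thetas j')" by (rule vnorm_tri)
    also have "\<dots> \<le> vnorm d v + (1/2 - alpha) * D" using close j' unfolding v_def D_def by auto
    finally show ?thesis by (simp add: algebra_simps)
  qed
  define A where "A = (vnorm d v)\<^sup>2 + sg\<^sup>2"
  define Bv where "Bv = (vnorm d u)\<^sup>2 + sg\<^sup>2"
  have Bv0: "0 < Bv" unfolding Bv_def using sg by (simp add: add_nonneg_pos)
  have nu2: "(vnorm d u)\<^sup>2 \<le> ((1/2 - alpha) * D)\<^sup>2" using nu vnorm_nonneg by (intro power_mono) auto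
  have nv2: "((1/2 + alpha) * D)\<^sup>2 \<le> (vnorm d v)\<^sup>2" using nv a0 D0 by (intro power_mono) auto
  have BvS: "Bv \<le> S"
  proof -
    have "((1/2 - alpha) * D)\<^sup>2 \<le> D\<^sup>2" using a0 a1 D0
      by (intro power_mono) (auto intro: mult_left_le_one_le)
    then show ?thesis unfolding Bv_def S_def using nu2 by simp
  qed
  have AB: "Bv + 2 * q * S \<le> A"
  proof -
    have "((1/2 + alpha) * D)\<^sup>2 - ((1/2 - alpha) * D)\<^sup>2 = 2 * alpha * D\<^sup>2"
      by (simp add: power2_eq_square algebra_simps)
    then show ?thesis unfolding A_def Bv_def using nu2 nv2 qS by (simp add: algebra_simps)
  qed
  define T where "T = Bv + q * S"
  define lam where "lam = q / (8 * A)"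
  define lam' where "lam' = q / (8 * S)"
  have A0: "0 < A" using AB Bv0 q0 S by (smt (verit) mult_nonneg_nonneg)
  have l0: "0 \<le> lam" unfolding lam_def using q0 A0 by simp
  have l0': "0 \<le> lam'" unfolding lam'_def using q0 S by simp
  note low = arith_lower[OF q0 q1 S Bv0 BvS AB T_def lam_def]
  note up = arith_upper[OF q0 q1 S Bv0 BvS T_def lam'_def]
  have uu: "thetas j - theta j = u" by (simp add: u_def)
  have vv: "thetas j - theta j' = v" by (simp add: v_def)
  define E1 where "E1 = {Z \<in> space M. 0 \<le> (\<Sum>t<n'. (- lam) * (snd (Z t) - ip d (fst (Z t)) (theta j'))\<^sup>2 + lam * T)}"
  define E2 where "E2 = {Z \<in> space M. 0 \<le> (\<Sum>t<n'. lam' * (snd (Z t) - ip d (fst (Z t)) (theta j))\<^sup>2 + (- lam' * T))}"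
  have m1: "measure M E1 \<le> (exp (lam * T) / sqrt (1 - 2 * (- lam) * A)) ^ n'"
    unfolding E1_def M_def A_def
    using tail_bound[OF sg, of "- lam" d "thetas j" "theta j'" n' "lam * T"] low(1) unfolding A_def vv by simp
  have m2: "measure M E2 \<le> (exp (- lam' * T) / sqrt (1 - 2 * lam' * Bv)) ^ n'"
    unfolding E2_def M_def Bv_def
    using tail_bound[OF sg, of "lam'" d "thetas j" "theta j" n' "- lam' * T"] up(1) unfolding Bv_def uu by simp
  have pw: "x ^ n' \<le> exp (- (q\<^sup>2 / 32)) ^ n'" if "0 \<le> x" "x \<le> exp (- (q\<^sup>2 / 32))" for x
    using that by (intro power_mono) auto
  have ex: "exp (- (q\<^sup>2 / 32)) ^ n' = exp (- (1/32) * real n' * q\<^sup>2)"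
    by (simp add: exp_of_nat_mult[symmetric])
  have m1': "measure M E1 \<le> exp (- (1/32) * real n' * q\<^sup>2)"
    using m1 pw[OF _ low(2)] ex low(1) by (smt (verit) divide_nonneg_nonneg exp_ge_zero real_sqrt_ge_zero)
  have m2': "measure M E2 \<le> exp (- (1/32) * real n' * q\<^sup>2)"
    using m2 pw[OF _ up(2)] ex up(1) by (smt (verit) divide_nonneg_nonneg exp_ge_zero real_sqrt_ge_zero)
  interpret D: prob_space "data_dist d (thetas j) sg" by (rule prob_space_data[OF sg])
  interpret MP: prob_space M unfolding M_def sample_dist_def by (rule prob_space_PiM) (rule D.prob_space_axioms)
  have meas: "(\<lambda>Z. \<Sum>t<n'. c1 * (snd (Z t) - ip d (fst (Z t)) th)\<^sup>2 + c2) \<in> borel_measurable M" for c1 c2 th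
    unfolding M_def by (rule sample_fun_meas) measurable
  have E1s: "E1 \<in> sets M" unfolding E1_def using meas by measurable
  have E2s: "E2 \<in> sets M" unfolding E2_def using meas by measurable
  have sub: "{Z \<in> space M. assign n' d k theta Z = j'} \<subseteq> E1 \<union> E2"
  proof
    fix Z assume "Z \<in> {Z \<in> space M. assign n' d k theta Z = j'}"
    then have Z: "Z \<in> space M" and aZ: "assign n' d k theta Z = j'" by auto
    let ?a = "\<lambda>t. (snd (Z t) - ip d (fst (Z t)) (theta j'))\<^sup>2"
    let ?b = "\<lambda>t. (snd (Z t) - ip d (fst (Z t)) (theta j))\<^sup>2"
    have "emp_loss n' d (theta j') Z \<le> emp_loss n' d (theta j) Z"
      using assign_prop[of k n' d theta Z] k j aZ by auto
    then have ab: "(\<Sum>t<n'. ?a t) \<le> (\<Sum>t<n'. ?b t)"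
      unfolding emp_loss_def using n by (simp add: divide_le_cancel)
    have s1: "(\<Sum>t<n'. (- lam) * ?a t + lam * T) = lam * (real n' * T - (\<Sum>t<n'. ?a t))"
      by (simp only: sum.distrib sum_distrib_left[symmetric] sum_constant card_lessThan) (simp add: algebra_simps)
    have s2: "(\<Sum>t<n'. lam' * ?b t + (- lam' * T)) = lam' * ((\<Sum>t<n'. ?b t) - real n' * T)"
      by (simp only: sum.distrib sum_distrib_left[symmetric] sum_constant card_lessThan) (simp add: algebra_simps)
    show "Z \<in> E1 \<union> E2"
    proof (cases "(\<Sum>t<n'. ?a t) \<le> real n' * T")
      case True
      then have "0 \<le> lam * (real n' * T - (\<Sum>t<n'. ?a t))" using l0 by simp
      then show ?thesis unfolding E1_def using Z s1 by simp
    next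
      case False
      then have "0 \<le> lam' * ((\<Sum>t<n'. ?b t) - real n' * T)" using l0' ab by simp
      then show ?thesis unfolding E2_def using Z s2 by simp
    qed
  qed
  have "measure M (E1 \<union> E2) \<le> measure M E1 + measure M E2"
    using E1s E2s by (rule measure_Un_le)
  also have "\<dots> \<le> 2 * exp (- (1/32) * real n' * q\<^sup>2)" using m1' m2' by simp
  finally show ?thesis using sub E1s E2s unfolding qrho by (intro exI[of _ "E1 \<union> E2"]) auto
qed


theorem lemma1:
  shows "\<exists>c1 c2 :: real. c1 > 0 \<and> c2 > 0 \<and>
    (\<forall>(d::nat) (k::nat) (n'::nat) (thetas::nat \<Rightarrow> nat \<Rightarrow> real) (theta::nat \<Rightarrow> nat \<Rightarrow> real)
       (sg::real) (alpha::real) (j::nat).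
       2 \<le> k \<longrightarrow> 0 < n' \<longrightarrow> 0 < sg \<longrightarrow> 0 < alpha \<longrightarrow> alpha < 1/2 \<longrightarrow> j < k \<longrightarrow>
       (\<forall>l<k. vnorm d (theta l - thetas l) \<le> (1/2 - alpha) * Delta d k thetas) \<longrightarrow>
       (let M = sample_dist n' d (thetas j) sg;
            rho = (Delta d k thetas)\<^sup>2 / sg\<^sup>2;
            B = c1 * exp (- c2 * real n' * (alpha * rho / (rho + 1))\<^sup>2)
        in (\<forall>j'<k. j' \<noteq> j \<longrightarrow>
              measure M {Z \<in> space M. assign n' d k theta Z = j'} \<le> B)
         \<and> measure M {Z \<in> space M. assign n' d k theta Z \<noteq> j} \<le> real k * B))"
proof -
  have main: "\<forall>(d::nat) (k::nat) (n'::nat) (thetas::nat \<Rightarrow> nat \<Rightarrow> real) (theta::nat \<Rightarrow> nat \<Rightarrow> real)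
       (sg::real) (alpha::real) (j::nat).
       2 \<le> k \<longrightarrow> 0 < n' \<longrightarrow> 0 < sg \<longrightarrow> 0 < alpha \<longrightarrow> alpha < 1/2 \<longrightarrow> j < k \<longrightarrow>
       (\<forall>l<k. vnorm d (theta l - thetas l) \<le> (1/2 - alpha) * Delta d k thetas) \<longrightarrow>
       (let M = sample_dist n' d (thetas j) sg;
            rho = (Delta d k thetas)\<^sup>2 / sg\<^sup>2;
            B = 2 * exp (- (1/32) * real n' * (alpha * rho / (rho + 1))\<^sup>2)
        in (\<forall>j'<k. j' \<noteq> j \<longrightarrow>
              measure M {Z \<in> space M. assign n' d k theta Z = j'} \<le> B)
         \<and> measure M {Z \<in> space M. assign n' d k theta Z \<noteq> j} \<le> real k * B)"
  proof (intro allI impI)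
  fix d k n' :: nat and thetas theta :: "nat \<Rightarrow> nat \<Rightarrow> real" and sg alpha :: real and j :: nat
  assume k: "2 \<le> k" and n: "0 < n'" and sg: "0 < sg" and a0: "0 < alpha" and a1: "alpha < 1/2"
    and j: "j < k" and close: "\<forall>l<k. vnorm d (theta l - thetas l) \<le> (1/2 - alpha) * Delta d k thetas"
  define M where "M = sample_dist n' d (thetas j) sg"
  define rho where "rho = (Delta d k thetas)\<^sup>2 / sg\<^sup>2"
  define B where "B = 2 * exp (- (1/32) * real n' * (alpha * rho / (rho + 1))\<^sup>2)"
  interpret D: prob_space "data_dist d (thetas j) sg" by (rule prob_space_data[OF sg])
  interpret MP: prob_space M unfolding M_def sample_dist_def by (rule prob_space_PiM) (rule D.prob_space_axioms)
  have PB: "\<exists>U. U \<in> sets M \<and> {Z \<in> space M. assign n' d k theta Z = j'} \<subseteq> U \<and> measure M U \<le> B"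
    if "j' < k" "j' \<noteq> j" for j'
    using pair_bound[OF k n sg a0 a1 j that(1) that(2) close] unfolding M_def rho_def B_def by simp
  have part1: "\<forall>j'<k. j' \<noteq> j \<longrightarrow> measure M {Z \<in> space M. assign n' d k theta Z = j'} \<le> B"
  proof (intro allI impI)
    fix j' assume "j' < k" "j' \<noteq> j"
    then obtain U where U: "U \<in> sets M" "{Z \<in> space M. assign n' d k theta Z = j'} \<subseteq> U" "measure M U \<le> B"
      using PB by blast
    have "measure M {Z \<in> space M. assign n' d k theta Z = j'} \<le> measure M U"
      using U(1,2) by (rule MP.finite_measure_mono[rotated])
    then show "measure M {Z \<in> space M. assign n' d k theta Z = j'} \<le> B" using U(3) by simp
  qed
  obtain Uf where Uf: "\<And>j'. j' \<in> {..<k} - {j} \<Longrightarrow> Uf j' \<in> sets M \<and>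
      {Z \<in> space M. assign n' d k theta Z = j'} \<subseteq> Uf j' \<and> measure M (Uf j') \<le> B"
  proof -
    have "\<forall>j'\<in>{..<k} - {j}. \<exists>U. U \<in> sets M \<and>
      {Z \<in> space M. assign n' d k theta Z = j'} \<subseteq> U \<and> measure M U \<le> B"
      using PB by auto
    then obtain Uf where "\<forall>j'\<in>{..<k} - {j}. Uf j' \<in> sets M \<and>
      {Z \<in> space M. assign n' d k theta Z = j'} \<subseteq> Uf j' \<and> measure M (Uf j') \<le> B"
      by (rule bchoice[THEN exE]) blast
    then show ?thesis using that by blast
  qed
  have B0: "0 \<le> B" unfolding B_def by simp
  have sub: "{Z \<in> space M. assign n' d k theta Z \<noteq> j} \<subseteq> (\<Union>j'\<in>{..<k} - {j}. Uf j')"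
  proof
    fix Z assume Z: "Z \<in> {Z \<in> space M. assign n' d k theta Z \<noteq> j}"
    let ?j = "assign n' d k theta Z"
    have "?j < k" using assign_prop[of k n' d theta Z] k by auto
    then have jin: "?j \<in> {..<k} - {j}" using Z by auto
    then have "Z \<in> Uf ?j" using Uf[OF jin] Z by auto
    then show "Z \<in> (\<Union>j'\<in>{..<k} - {j}. Uf j')" using jin by blast
  qed
  have "measure M {Z \<in> space M. assign n' d k theta Z \<noteq> j} \<le> measure M (\<Union>j'\<in>{..<k} - {j}. Uf j')"
    using sub by (intro MP.finite_measure_mono) (use Uf in auto)
  also have "\<dots> \<le> (\<Sum>j'\<in>{..<k} - {j}. measure M (Uf j'))"
    by (rule measure_UNION_le) (use Uf in auto)
  also have "\<dots> \<le> real (card ({..<k} - {j})) * B"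
    using Uf by (intro sum_bounded_above) auto
  also have "\<dots> \<le> real k * B"
    proof -
    have "card ({..<k} - {j}) \<le> card {..<k}" by (rule card_mono) auto
    then show ?thesis using B0 by (intro mult_right_mono) auto
  qed
  finally have part2: "measure M {Z \<in> space M. assign n' d k theta Z \<noteq> j} \<le> real k * B" .
  show "let M = sample_dist n' d (thetas j) sg;
            rho = (Delta d k thetas)\<^sup>2 / sg\<^sup>2;
            B = 2 * exp (- (1/32) * real n' * (alpha * rho / (rho + 1))\<^sup>2)
        in (\<forall>j'<k. j' \<noteq> j \<longrightarrow>
              measure M {Z \<in> space M. assign n' d k theta Z = j'} \<le> B)
         \<and> measure M {Z \<in> space M. assign n' d k theta Z \<noteq> j} \<le> real k * B"
    unfolding Let_def M_def[symmetric] rho_def[symmetric] B_def[symmetric] using part1 part2 by blast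
qed
  show ?thesis
    by (rule exI[of _ 2], rule exI[of _ "1/32"]) (use main in simp)
qed


end
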